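(* Let $\varphi$ be an automorphism of the Grassmann algebra $E$ with $\varphi^{2}=\mathrm{id}_E$, and let $\beta=\{e_1,e_2,\ldots\}$ be a basis of $L$ (the generators of $E$). Put $I_\beta=\{n\in\mathbb{N}\mid \varphi(e_n)=\pm e_n\}$. Suppose that $I_\beta$ is infinite and $I_\beta\neq\mathbb{N}$. Then $\varphi$ is of canonical type, i.e. $\varphi(E_{(0)})=E_{(0)}$ and $\varphi(E_{(1)})=E_{(1)}$.
   Context: $F$ is a field of characteristic zero, $L$ is an infinite-dimensional $F$-vector space with basis $e_1,e_2,\ldots$, and $E$ is the Grassmann (exterior) algebra of $L$: it has basis $1$ and the monomials $e_{i_1}\cdots e_{i_k}$ with $i_1<\cdots<i_k$, $k\ge1$, with $e_ie_j=-e_je_i$. The natural grading $E_{can}=E_{(0)}\oplus E_{(1)}$ has $E_{(0)}$ spanned by $1$ and the monomials of even length and $E_{(1)}$ spanned by the monomials of odd length. An automorphism $\varphi$ of $E$ with $\varphi^2=\mathrm{id}$ is of canonical type if $\varphi(E_{(0)})=E_{(0)}$ and $\varphi(E_{(1)})=E_{(1)}$. *)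

theory Defs
  imports Main
begin

text \<open>Grassmann algebra E over a field F of characteristic zero, generated by
 e_0, e_1, e_2, ... (indexed from 0). An element is represented by its coefficient
 function on monomials; a monomial e_{i_1}...e_{i_k} with i_1 < ... < i_k is
 represented by the finite set {i_1,...,i_k} (the empty set is the unit 1).\<close>

definition grass :: "(nat set \<Rightarrow> 'a::field) set" where
  "grass = {x. finite {S. x S \<noteq> 0} \<and> (\<forall>S. x S \<noteq> 0 \<longrightarrow> finite S)}"

definition gadd :: "(nat set \<Rightarrow> 'a::field) \<Rightarrow> (nat set \<Rightarrow> 'a) \<Rightarrow> nat set \<Rightarrow> 'a" where
  "gadd x y = (\<lambda>S. x S + y S)"

definition gscale :: "'a::field \<Rightarrow> (nat set \<Rightarrow> 'a) \<Rightarrow> nat set \<Rightarrow> 'a" where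
  "gscale c x = (\<lambda>S. c * x S)"

text \<open>Sign of the permutation sorting the concatenation of monomials A and B.\<close>
definition gsign :: "nat set \<Rightarrow> nat set \<Rightarrow> 'a::field" where
  "gsign A B = (- 1) ^ card {(a, b). a \<in> A \<and> b \<in> B \<and> b < a}"

definition gmult :: "(nat set \<Rightarrow> 'a::field) \<Rightarrow> (nat set \<Rightarrow> 'a) \<Rightarrow> nat set \<Rightarrow> 'a" where
  "gmult x y = (\<lambda>S. if finite S then (\<Sum>A\<in>Pow S. gsign A (S - A) * x A * y (S - A)) else 0)"

definition gone :: "nat set \<Rightarrow> 'a::field" where
  "gone = (\<lambda>S. if S = {} then 1 else 0)"

definition gen :: "nat \<Rightarrow> nat set \<Rightarrow> 'a::field" where
  "gen n = (\<lambda>S. if S = {n} then 1 else 0)"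

definition gL :: "(nat set \<Rightarrow> 'a::field) set" where
  "gL = {x \<in> grass. \<forall>S. x S \<noteq> 0 \<longrightarrow> card S = 1}"

definition gE0 :: "(nat set \<Rightarrow> 'a::field) set" where
  "gE0 = {x \<in> grass. \<forall>S. x S \<noteq> 0 \<longrightarrow> even (card S)}"

definition gE1 :: "(nat set \<Rightarrow> 'a::field) set" where
  "gE1 = {x \<in> grass. \<forall>S. x S \<noteq> 0 \<longrightarrow> odd (card S)}"

definition grass_aut :: "((nat set \<Rightarrow> 'a::field) \<Rightarrow> (nat set \<Rightarrow> 'a)) \<Rightarrow> bool" where
  "grass_aut \<phi> \<longleftrightarrow> bij_betw \<phi> grass grass
     \<and> (\<forall>x\<in>grass. \<forall>y\<in>grass. \<phi> (gadd x y) = gadd (\<phi> x) (\<phi> y))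
     \<and> (\<forall>c. \<forall>x\<in>grass. \<phi> (gscale c x) = gscale c (\<phi> x))
     \<and> (\<forall>x\<in>grass. \<forall>y\<in>grass. \<phi> (gmult x y) = gmult (\<phi> x) (\<phi> y))
     \<and> \<phi> gone = gone"

definition is_L_basis :: "(nat \<Rightarrow> nat set \<Rightarrow> 'a::field) \<Rightarrow> bool" where
  "is_L_basis b \<longleftrightarrow> (\<forall>n. b n \<in> gL)
     \<and> (\<forall>(c::nat \<Rightarrow> 'a) N. (\<forall>S. (\<Sum>n<N. c n * b n S) = 0) \<longrightarrow> (\<forall>n<N. c n = 0))
     \<and> (\<forall>x\<in>gL. \<exists>(c::nat \<Rightarrow> 'a) N. x = (\<lambda>S. \<Sum>n<N. c n * b n S))"

definition I_beta :: "((nat set \<Rightarrow> 'a::field) \<Rightarrow> (nat set \<Rightarrow> 'a)) \<Rightarrow> (nat \<Rightarrow> nat set \<Rightarrow> 'a) \<Rightarrow> nat set" where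
  "I_beta \<phi> b = {n. \<phi> (b n) = b n \<or> \<phi> (b n) = gscale (- 1) (b n)}"

end

theory Submission
  imports Defs "HOL-Library.Function_Algebras" "HOL.Vector_Spaces"
begin


lemma sum_fun_apply: "(sum f A) x = sum (\<lambda>a. f a x) A"
  by (induction A rule: infinite_finite_induct) auto

global_interpretation gv: vector_space "gscale :: 'a::field \<Rightarrow> (nat set \<Rightarrow> 'a) \<Rightarrow> _"
  by unfold_locales (auto simp: gscale_def plus_fun_def fun_eq_iff algebra_simps)

lemma gL_grass: "x \<in> gL \<Longrightarrow> x \<in> grass" by (simp add: gL_def)

lemma basis_inj:
  fixes b :: "nat \<Rightarrow> nat set \<Rightarrow> 'a::field"
  assumes "is_L_basis b" shows "inj b"
proof (rule injI, rule ccontr)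
  fix n m assume eq: "b n = b m" and ne: "n \<noteq> m"
  define c :: "nat \<Rightarrow> 'a" where "c k = (if k = n then 1 else if k = m then -1 else 0)" for k
  define N where "N = Suc (max n m)"
  have "\<forall>S. (\<Sum>k<N. c k * b k S) = 0"
  proof
    fix S
    have "(\<Sum>k<N. c k * b k S) = (\<Sum>k<N. (if k = n then b n S else 0) + (if k = m then - b m S else 0))"
      by (rule sum.cong) (auto simp: c_def ne)
    also have "\<dots> = b n S - b m S" using N_def by (simp add: sum.distrib)
    finally show "(\<Sum>k<N. c k * b k S) = 0" using eq by simp
  qed
  moreover have "\<forall>(c::nat \<Rightarrow> 'a) N. (\<forall>S. (\<Sum>n<N. c n * b n S) = 0) \<longrightarrow> (\<forall>n<N. c n = 0)"
    using assms by (simp add: is_L_basis_def)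
  ultimately have "\<forall>k<N. c k = 0" by blast
  then have "c n = 0" by (simp add: N_def)
  then show False by (simp add: c_def)
qed

lemma basis_escape:
  fixes b :: "nat \<Rightarrow> nat set \<Rightarrow> 'a::field"
  assumes B: "is_L_basis b" and I: "infinite I" and V: "finite V"
  shows "\<exists>n\<in>I. \<exists>j. j \<notin> V \<and> b n {j} \<noteq> 0"
proof (rule ccontr)
  assume H: "\<not> ?thesis"
  have inj: "inj b" using basis_inj[OF B] .
  obtain I' where I': "I' \<subseteq> I" "finite I'" "card I' = Suc (card V)"
    using infinite_arbitrarily_large[OF I] by blast
  let ?B = "b ` I'"
  have cardB: "card ?B = Suc (card V)" using I' inj by (simp add: card_image inj_on_subset)
  have span: "?B \<subseteq> gv.span (gen ` V)"
  proof
    fix v assume "v \<in> ?B"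
    then obtain n where n: "n \<in> I'" "v = b n" by auto
    have bnL: "b n \<in> gL" using B by (simp add: is_L_basis_def)
    have "b n = (\<Sum>j\<in>V. gscale (b n {j}) (gen j))"
    proof
      fix S
      show "b n S = (\<Sum>j\<in>V. gscale (b n {j}) (gen j)) S"
      proof (cases "\<exists>j. S = {j}")
        case True
        then obtain j where j: "S = {j}" by auto
        have "(\<Sum>j\<in>V. gscale (b n {j}) (gen j)) S = (\<Sum>k\<in>V. if k = j then b n {j} else 0)"
          unfolding sum_fun_apply by (rule sum.cong) (auto simp: gscale_def gen_def j)
        also have "\<dots> = b n S" using H n I' V j by auto
        finally show ?thesis by simp
      next
        case False
        then have "b n S = 0" using bnL by (auto simp: gL_def card_1_singleton_iff)
        moreover have "(\<Sum>j\<in>V. gscale (b n {j}) (gen j)) S = 0"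
          unfolding sum_fun_apply by (rule sum.neutral) (use False in \<open>auto simp: gscale_def gen_def\<close>)
        ultimately show ?thesis by simp
      qed
    qed
    moreover have "(\<Sum>j\<in>V. gscale (b n {j}) (gen j)) \<in> gv.span (gen ` V)"
      by (intro gv.span_sum gv.span_scale gv.span_base) auto
    ultimately show "v \<in> gv.span (gen ` V)" using n by simp
  qed
  have indep: "gv.independent ?B"
  proof
    assume "gv.dependent ?B"
    then obtain t u where tu: "finite t" "t \<subseteq> ?B" "(\<Sum>v\<in>t. gscale (u v) v) = 0" "\<exists>v\<in>t. u v \<noteq> 0"
      unfolding gv.dependent_explicit by blast
    define N where "N = Suc (Max I')"
    define c where "c k = (if k \<in> I' \<and> b k \<in> t then u (b k) else 0)" for k
    have I'N: "I' \<subseteq> {..<N}" using I' by (auto simp: N_def less_Suc_eq_le)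
    have "\<forall>S. (\<Sum>k<N. c k * b k S) = 0"
    proof
      fix S
      have "(\<Sum>k<N. c k * b k S) = (\<Sum>k\<in>{k\<in>{..<N}. k \<in> I' \<and> b k \<in> t}. u (b k) * b k S)"
        by (subst sum.inter_filter) (auto simp: c_def intro!: sum.cong)
      also have "{k\<in>{..<N}. k \<in> I' \<and> b k \<in> t} = {k \<in> I'. b k \<in> t}" using I'N by auto
      also have "(\<Sum>k\<in>{k \<in> I'. b k \<in> t}. u (b k) * b k S) = (\<Sum>v\<in>b ` {k \<in> I'. b k \<in> t}. u v * v S)"
        by (rule sum.reindex[symmetric, unfolded comp_def]) (rule inj_on_subset[OF inj], simp)
      also have "b ` {k \<in> I'. b k \<in> t} = t" using tu(2) by auto
      also have "(\<Sum>v\<in>t. u v * v S) = (\<Sum>v\<in>t. gscale (u v) v) S"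
        by (simp add: sum_fun_apply gscale_def)
      finally show "(\<Sum>k<N. c k * b k S) = 0" using tu(3) by simp
    qed
    then have "\<forall>k<N. c k = 0" using B unfolding is_L_basis_def by blast
    moreover obtain v where "v \<in> t" "u v \<noteq> 0" using tu by auto
    moreover then obtain k where "k \<in> I'" "v = b k" using tu by auto
    ultimately show False using I'N by (auto simp: c_def)
  qed
  have "card ?B \<le> card (gen ` V :: (nat set \<Rightarrow> 'a) set)"
    using gv.independent_span_bound[OF _ indep span] V by auto
  also have "\<dots> \<le> card V" using V card_image_le by blast
  finally show False using cardB by simp
qed


definition mono_g :: "nat set \<Rightarrow> nat set \<Rightarrow> 'a::field" where
  "mono_g S = (\<lambda>T. if T = S then 1 else 0)"

definition Par :: "bool \<Rightarrow> (nat set \<Rightarrow> 'a::field) \<Rightarrow> bool" where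
  "Par q x \<longleftrightarrow> (\<forall>S. x S \<noteq> 0 \<longrightarrow> odd (card S) = q)"

lemma gen_mono: "gen i = mono_g {i}" by (simp add: gen_def mono_g_def)

lemma mono_grass: "finite S \<Longrightarrow> mono_g S \<in> grass"
  by (simp add: grass_def mono_g_def)

lemma gscale_grass: "x \<in> grass \<Longrightarrow> gscale c x \<in> grass"
  unfolding grass_def gscale_def by (auto elim!: finite_subset[rotated])

lemma gmult_scale_left: "gmult (gscale c x) y = gscale c (gmult x y)"
  unfolding gmult_def gscale_def by (auto simp: fun_eq_iff sum_distrib_left ac_simps)

lemma gmult_scale_right: "gmult x (gscale c y) = gscale c (gmult x y)"
  unfolding gmult_def gscale_def by (auto simp: fun_eq_iff sum_distrib_left ac_simps)

lemma G1: "finite T \<Longrightarrow> gmult (gen i) y T = (if i \<in> T then gsign {i} (T - {i}) * y (T - {i}) else 0)"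
proof -
  assume T: "finite T"
  have "gmult (gen i) y T = (\<Sum>A\<in>Pow T. gsign A (T - A) * gen i A * y (T - A))"
    using T by (simp add: gmult_def)
  also have "\<dots> = (\<Sum>A\<in>Pow T. if A = {i} then gsign {i} (T - {i}) * y (T - {i}) else 0)"
    by (rule sum.cong) (auto simp: gen_def)
  also have "\<dots> = (if i \<in> T then gsign {i} (T - {i}) * y (T - {i}) else 0)"
    using T by (simp add: sum.delta')
  finally show ?thesis .
qed

lemma G2: "finite T \<Longrightarrow> gmult x (gen i) T = (if i \<in> T then gsign (T - {i}) {i} * x (T - {i}) else 0)"
proof -
  assume T: "finite T"
  have "gmult x (gen i) T = (\<Sum>A\<in>Pow T. gsign A (T - A) * x A * gen i (T - A))"
    using T by (simp add: gmult_def)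
  also have "\<dots> = (\<Sum>A\<in>Pow T. if A = T - {i} \<and> i \<in> T then gsign (T - {i}) {i} * x (T - {i}) else 0)"
    by (rule sum.cong) (auto simp: gen_def)
  also have "\<dots> = (if i \<in> T then gsign (T - {i}) {i} * x (T - {i}) else 0)"
    using T by (cases "i \<in> T") (auto simp: sum.delta')
  finally show ?thesis .
qed

lemma gsign_sq: "gsign A B * gsign A B = (1::'a::field)"
  by (simp add: gsign_def flip: power_add)

lemma gsign_nz: "gsign A B \<noteq> (0::'a::field)"
  by (simp add: gsign_def)

lemma gsign_swap:
  assumes B: "finite B" and j: "j \<notin> B"
  shows "gsign B {j} = (-1) ^ card B * (gsign {j} B :: 'a::field)"
proof -
  have e1: "{(a, b). a \<in> B \<and> b \<in> {j} \<and> b < a} = (\<lambda>a. (a, j)) ` {a\<in>B. j < a}" by auto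
  have e2: "{(a, b). a \<in> {j} \<and> b \<in> B \<and> b < a} = (\<lambda>b. (j, b)) ` {b\<in>B. b < j}" by auto
  have c1: "card {(a, b). a \<in> B \<and> b \<in> {j} \<and> b < a} = card {a\<in>B. j < a}"
    unfolding e1 by (rule card_image) (auto simp: inj_on_def)
  have c2: "card {(a, b). a \<in> {j} \<and> b \<in> B \<and> b < a} = card {b\<in>B. b < j}"
    unfolding e2 by (rule card_image) (auto simp: inj_on_def)
  have "B = {a\<in>B. j < a} \<union> {b\<in>B. b < j}" using j by auto (metis linorder_neqE_nat)
  then have cB: "card B = card {a\<in>B. j < a} + card {b\<in>B. b < j}"
    using B by (metis (no_types, lifting) card_Un_disjoint disjoint_iff finite_Un mem_Collect_eq not_less_iff_gr_or_eq)
  have "card {a\<in>B. j < a} + card {b\<in>B. b < j} + card {b\<in>B. b < j} = card {a\<in>B. j < a} + 2 * card {b\<in>B. b < j}"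
    by simp
  then show ?thesis
    unfolding gsign_def c1 c2 cB power_add[symmetric]
    by (simp only:) (simp add: power_add power_mult)
qed

lemma AC:
  assumes l: "l \<in> gL"
  shows "gmult (gen m) l = gmult l (gscale (-1) (gen m))"
proof
  fix T
  show "gmult (gen m) l T = gmult l (gscale (-1) (gen m)) T"
  proof (cases "finite T")
    case False then show ?thesis by (simp add: gmult_def)
  next
    case T: True
    show ?thesis
    proof (cases "m \<in> T \<and> l (T - {m}) \<noteq> 0")
      case True
      then have "card (T - {m}) = 1" using l by (auto simp: gL_def)
      then have "gsign (T - {m}) {m} = (-1) * (gsign {m} (T - {m}) :: 'a)"
        using gsign_swap[of "T - {m}" m] T by simp
      then show ?thesis using T by (simp only: gmult_scale_right) (simp add: G1 G2 gscale_def)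
    next
      case False
      then show ?thesis using T by (simp only: gmult_scale_right) (auto simp: G1 G2 gscale_def)
    qed
  qed
qed

lemma K:
  fixes y l :: "nat set \<Rightarrow> 'a::field_char_0"
  assumes y: "y \<in> grass" and l: "l \<in> gL"
    and anti: "gmult y l = gscale (-1) (gmult l y)"
    and j: "j \<notin> \<Union>{A. y A \<noteq> 0}" and lj: "l {j} \<noteq> 0" and yS: "y S \<noteq> 0"
  shows "odd (card S)"
proof (rule ccontr)
  assume ev: "\<not> odd (card S)"
  let ?V = "\<Union>{A. y A \<noteq> 0}"
  have Sf: "finite S" using y yS by (auto simp: grass_def)
  have jS: "j \<notin> S" using j yS by auto
  define T where "T = insert j S"
  have Tf: "finite T" using Sf by (simp add: T_def)
  have TS: "T - {j} = S" "T - S = {j}" using jS by (auto simp: T_def)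
  have sub: "y A \<noteq> 0 \<Longrightarrow> A \<subseteq> ?V" for A by auto
  have lsing: "l B \<noteq> 0 \<Longrightarrow> \<exists>k. B = {k}" for B using l by (auto simp: gL_def card_1_singleton_iff)
  have m1: "gmult y l T = gsign S {j} * y S * l {j}"
  proof -
    have "gmult y l T = (\<Sum>A\<in>Pow T. if A = S then gsign S {j} * y S * l {j} else 0)"
    proof -
      have "gmult y l T = (\<Sum>A\<in>Pow T. gsign A (T - A) * y A * l (T - A))" using Tf by (simp add: gmult_def)
      also have "\<dots> = (\<Sum>A\<in>Pow T. if A = S then gsign S {j} * y S * l {j} else 0)"
    proof (rule sum.cong[OF refl])
      fix A assume A: "A \<in> Pow T"
      show "gsign A (T - A) * y A * l (T - A) = (if A = S then gsign S {j} * y S * l {j} else 0)"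
      proof (cases "y A \<noteq> 0 \<and> l (T - A) \<noteq> 0")
        case True
        then obtain k where k: "T - A = {k}" using lsing by blast
        have "j \<notin> A" using sub True j by blast
        then have "j \<in> T - A" by (simp add: T_def)
        then have "A = S" using k A TS by auto
        then show ?thesis using TS by simp
      next
        case False
        then show ?thesis using TS by auto
      qed
    qed
    finally show ?thesis .
    qed
    also have "\<dots> = gsign S {j} * y S * l {j}" using Tf by (simp add: sum.delta' T_def subset_insertI)
    finally show ?thesis .
  qed
  have m2: "gmult l y T = gsign {j} S * l {j} * y S"
  proof -
    have "gmult l y T = (\<Sum>A\<in>Pow T. if A = {j} then gsign {j} S * l {j} * y S else 0)"
    proof -
      have "gmult l y T = (\<Sum>A\<in>Pow T. gsign A (T - A) * l A * y (T - A))" using Tf by (simp add: gmult_def)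
      also have "\<dots> = (\<Sum>A\<in>Pow T. if A = {j} then gsign {j} S * l {j} * y S else 0)"
    proof (rule sum.cong[OF refl])
      fix A assume A: "A \<in> Pow T"
      show "gsign A (T - A) * l A * y (T - A) = (if A = {j} then gsign {j} S * l {j} * y S else 0)"
      proof (cases "l A \<noteq> 0 \<and> y (T - A) \<noteq> 0")
        case True
        then obtain k where k: "A = {k}" using lsing by blast
        have "j \<notin> T - A" using sub True j by blast
        then have "A = {j}" using k A by (auto simp: T_def)
        then show ?thesis using TS by simp
      next
        case False
        then show ?thesis using TS by auto
      qed
    qed
    finally show ?thesis .
    qed
    also have "\<dots> = gsign {j} S * l {j} * y S" using Sf by (simp add: sum.delta' T_def)
    finally show ?thesis .
  qed
  have "gmult y l T = - gmult l y T" using anti by (simp add: gscale_def fun_eq_iff)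
  then have "(gsign S {j} + gsign {j} S) * (y S * l {j}) = (0::'a)"
    unfolding m1 m2 by (simp add: algebra_simps)
  then have "gsign S {j} + gsign {j} S = (0::'a)" using yS lj by simp
  moreover have "gsign S {j} = (gsign {j} S :: 'a)" using gsign_swap[OF Sf jS] ev by simp
  ultimately have "2 * gsign {j} S = (0::'a)" by simp
  then show False using gsign_nz[where 'a='a] by simp
qed

lemma Par_gmult:
  assumes "Par p x" "Par q y" shows "Par (p \<noteq> q) (gmult x y)"
  unfolding Par_def
proof (intro allI impI)
  fix T assume nz: "gmult x y T \<noteq> 0"
  then have Tf: "finite T" by (auto simp: gmult_def split: if_splits)
  then have "(\<Sum>A\<in>Pow T. gsign A (T - A) * x A * y (T - A)) \<noteq> 0" using nz by (simp add: gmult_def)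
  then obtain A where A: "A \<in> Pow T" "x A \<noteq> 0" "y (T - A) \<noteq> 0"
    by (metis (no_types, lifting) mult_eq_0_iff sum.neutral)
  have "card T = card A + card (T - A)"
    using A(1) Tf by (simp add: card_Diff_subset card_mono finite_subset)
  then show "odd (card T) = (p \<noteq> q)" using assms A unfolding Par_def by auto
qed

lemma Par_gscale: "Par q x \<Longrightarrow> Par q (gscale c x)"
  by (simp add: Par_def gscale_def)

lemma Par_gadd: "Par q x \<Longrightarrow> Par q y \<Longrightarrow> Par q (gadd x y)"
  unfolding Par_def gadd_def by (metis add.right_neutral add_0)



lemma aut_grass: "grass_aut \<phi> \<Longrightarrow> x \<in> grass \<Longrightarrow> \<phi> x \<in> grass"
  unfolding grass_aut_def bij_betw_def by blast

lemma gen_grass: "gen m \<in> grass" by (simp add: gen_mono mono_grass)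

lemma phi_gen_odd:
  fixes \<phi> :: "(nat set \<Rightarrow> 'a::field_char_0) \<Rightarrow> (nat set \<Rightarrow> 'a)"
    and b :: "nat \<Rightarrow> nat set \<Rightarrow> 'a"
  assumes aut: "grass_aut \<phi>" and B: "is_L_basis b" and I: "infinite (I_beta \<phi> b)"
  shows "Par True (\<phi> (gen m))"
proof -
  define y where "y = \<phi> (gen m)"
  have y: "y \<in> grass" unfolding y_def by (rule aut_grass[OF aut gen_grass])
  define V where "V = \<Union>{A. y A \<noteq> 0}"
  have Vf: "finite V" using y unfolding V_def grass_def by auto
  have mult: "\<And>x z. x \<in> grass \<Longrightarrow> z \<in> grass \<Longrightarrow> \<phi> (gmult x z) = gmult (\<phi> x) (\<phi> z)"
    and scale: "\<And>c x. x \<in> grass \<Longrightarrow> \<phi> (gscale c x) = gscale c (\<phi> x)"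
    using aut unfolding grass_aut_def by blast+
  show ?thesis unfolding Par_def y_def[symmetric]
  proof (intro allI impI)
    fix S assume yS: "y S \<noteq> 0"
    obtain n j where n: "n \<in> I_beta \<phi> b" and j: "j \<notin> V" and bj: "b n {j} \<noteq> 0"
      using basis_escape[OF B I Vf] by blast
    have bL: "b n \<in> gL" using B by (simp add: is_L_basis_def)
    then have bG: "b n \<in> grass" by (rule gL_grass)
    obtain c :: 'a where c: "c \<noteq> 0" "\<phi> (b n) = gscale c (b n)"
    proof -
      have "\<phi> (b n) = b n \<or> \<phi> (b n) = gscale (-1) (b n)" using n by (simp add: I_beta_def)
      moreover have "b n = gscale 1 (b n)" by (simp add: gscale_def)
      ultimately show ?thesis using that by (metis one_neq_zero neg_equal_0_iff_equal)
    qed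
    have "\<phi> (gmult (gen m) (b n)) = \<phi> (gmult (b n) (gscale (-1) (gen m)))"
      using AC[OF bL] by simp
    moreover have "\<phi> (gmult (gen m) (b n)) = gmult y (gscale c (b n))"
      using mult[OF gen_grass bG] c(2) y_def by (simp only:)
    moreover have "\<phi> (gmult (b n) (gscale (-1) (gen m))) = gmult (gscale c (b n)) (gscale (-1) y)"
      using mult[OF bG gscale_grass[OF gen_grass]] scale[OF gen_grass] c(2) y_def by (simp only:)
    ultimately have "gmult y (gscale c (b n)) = gmult (gscale c (b n)) (gscale (-1) y)"
      by (simp only:)
    then have "gscale c (gmult y (b n)) = gscale (-1) (gscale c (gmult (b n) y))"
      by (simp only: gmult_scale_left gmult_scale_right)
    then have "gmult y (b n) = gscale (-1) (gmult (b n) y)"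
      using c(1) unfolding gscale_def fun_eq_iff
      by (metis minus_mult_right mult_cancel_left mult_minus1)
    then have "odd (card S)"
      using K[OF y bL _ _ bj yS] j unfolding V_def by blast
    then show "odd (card S) = True" by simp
  qed
qed



lemma gone_mono: "gone = mono_g {}" by (simp add: gone_def mono_g_def)

lemma mono_insert:
  assumes "finite S" "i \<notin> S"
  shows "mono_g (insert i S) = gmult (gscale (gsign {i} S) (gen i)) (mono_g S :: nat set \<Rightarrow> 'a::field)"
proof
  fix T
  show "mono_g (insert i S) T = gmult (gscale (gsign {i} S) (gen i)) (mono_g S :: nat set \<Rightarrow> 'a) T"
  proof (cases "finite T")
    case False
    then have "T \<noteq> insert i S" using assms by auto
    then show ?thesis using False by (simp add: gmult_def mono_g_def)
  next
    case True
    have eq: "(i \<in> T \<and> T - {i} = S) = (T = insert i S)" using assms by auto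
    show ?thesis
      unfolding gmult_scale_left
      using True gsign_sq[of "{i}" S, where 'a='a] eq
      by (auto simp: G1 gscale_def mono_g_def)
  qed
qed

lemma phi_mono:
  fixes \<phi> :: "(nat set \<Rightarrow> 'a::field_char_0) \<Rightarrow> (nat set \<Rightarrow> 'a)"
  assumes aut: "grass_aut \<phi>" and gens: "\<And>m. Par True (\<phi> (gen m))" and S: "finite S"
  shows "Par (odd (card S)) (\<phi> (mono_g S))"
  using S
proof (induction S rule: finite_induct)
  case empty
  have "\<phi> gone = gone" using aut by (simp add: grass_aut_def)
  then show ?case by (simp add: gone_mono[symmetric] Par_def gone_def)
next
  case (insert i S)
  have mult: "\<And>x z. x \<in> grass \<Longrightarrow> z \<in> grass \<Longrightarrow> \<phi> (gmult x z) = gmult (\<phi> x) (\<phi> z)"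
    and scale: "\<And>c x. x \<in> grass \<Longrightarrow> \<phi> (gscale c x) = gscale c (\<phi> x)"
    using aut unfolding grass_aut_def by blast+
  have "\<phi> (mono_g (insert i S)) = gmult (gscale (gsign {i} S) (\<phi> (gen i))) (\<phi> (mono_g S))"
    using mono_insert[OF insert(1,2), where 'a='a] mult[OF gscale_grass[OF gen_grass] mono_grass[OF insert(1)]]
      scale[OF gen_grass] by (simp only:)
  moreover have "Par (True \<noteq> odd (card S)) \<dots>"
    by (rule Par_gmult[OF Par_gscale[OF gens] insert(3)])
  ultimately show ?case using insert(1,2) by simp
qed

lemma phi_sum:
  fixes \<phi> :: "(nat set \<Rightarrow> 'a::field_char_0) \<Rightarrow> (nat set \<Rightarrow> 'a)"
  assumes aut: "grass_aut \<phi>" and gens: "\<And>m. Par True (\<phi> (gen m))" and x: "x \<in> grass"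
  shows "finite F \<Longrightarrow> F \<subseteq> {S. x S \<noteq> 0} \<Longrightarrow> (\<forall>S\<in>F. odd (card S) = q) \<Longrightarrow>
    (\<lambda>T. if T \<in> F then x T else 0) \<in> grass \<and> Par q (\<phi> (\<lambda>T. if T \<in> F then x T else 0))"
proof (induction F rule: finite_induct)
  case empty
  have "\<phi> (gscale 0 gone) = gscale 0 (\<phi> gone)"
    using aut unfolding grass_aut_def by (metis gone_mono mono_grass finite.emptyI)
  moreover have "gscale 0 f = (\<lambda>T. 0)" for f :: "nat set \<Rightarrow> 'a" by (simp add: gscale_def)
  ultimately have "\<phi> (\<lambda>T. 0) = (\<lambda>T. 0)" by metis
  then show ?case by (simp add: Par_def grass_def)
next
  case (insert S F)
  have add: "\<And>x z. x \<in> grass \<Longrightarrow> z \<in> grass \<Longrightarrow> \<phi> (gadd x z) = gadd (\<phi> x) (\<phi> z)"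
    and scale: "\<And>c x. x \<in> grass \<Longrightarrow> \<phi> (gscale c x) = gscale c (\<phi> x)"
    using aut unfolding grass_aut_def by blast+
  have IH: "(\<lambda>T. if T \<in> F then x T else 0) \<in> grass" "Par q (\<phi> (\<lambda>T. if T \<in> F then x T else 0))"
    using insert by auto
  have Sf: "finite S" using insert(4) x by (auto simp: grass_def)
  have eq: "(\<lambda>T. if T \<in> insert S F then x T else 0) = gadd (gscale (x S) (mono_g S)) (\<lambda>T. if T \<in> F then x T else 0)"
    using insert(2) by (auto simp: fun_eq_iff gadd_def gscale_def mono_g_def)
  have g: "(\<lambda>T. if T \<in> insert S F then x T else 0) \<in> grass"
  proof -
    have "{T. (if T \<in> insert S F then x T else 0) \<noteq> 0} \<subseteq> insert S F" by auto
    then show ?thesis using x insert(1) unfolding grass_def by (auto elim: finite_subset)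
  qed
  have "\<phi> (\<lambda>T. if T \<in> insert S F then x T else 0) = gadd (gscale (x S) (\<phi> (mono_g S))) (\<phi> (\<lambda>T. if T \<in> F then x T else 0))"
    unfolding eq using add[OF gscale_grass[OF mono_grass[OF Sf]] IH(1)] scale[OF mono_grass[OF Sf]] by (simp only:)
  moreover have "Par q (gscale (x S) (\<phi> (mono_g S)))"
    using Par_gscale[OF phi_mono[OF aut gens Sf]] insert(5) by simp
  ultimately show ?case using g Par_gadd IH(2) by simp
qed

lemma phi_par:
  fixes \<phi> :: "(nat set \<Rightarrow> 'a::field_char_0) \<Rightarrow> (nat set \<Rightarrow> 'a)"
  assumes aut: "grass_aut \<phi>" and gens: "\<And>m. Par True (\<phi> (gen m))" and x: "x \<in> grass"
    and q: "Par q x"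
  shows "Par q (\<phi> x)"
proof -
  have "x = (\<lambda>T. if T \<in> {S. x S \<noteq> 0} then x T else 0)" by auto
  moreover have "finite {S. x S \<noteq> 0}" using x by (simp add: grass_def)
  ultimately show ?thesis using phi_sum[OF aut gens x, of "{S. x S \<noteq> 0}" q] q unfolding Par_def
    by auto
qed

theorem mainTheorem1:
  fixes \<phi> :: "(nat set \<Rightarrow> 'a::field_char_0) \<Rightarrow> (nat set \<Rightarrow> 'a)"
    and b :: "nat \<Rightarrow> nat set \<Rightarrow> 'a"
  assumes "grass_aut \<phi>"
    and "\<forall>x\<in>grass. \<phi> (\<phi> x) = x"
    and "is_L_basis b"
    and "infinite (I_beta \<phi> b)"
    and "I_beta \<phi> b \<noteq> UNIV"
  shows "\<phi> ` gE0 = gE0 \<and> \<phi> ` gE1 = gE1"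
proof -
  have gens: "\<And>m. Par True (\<phi> (gen m))" using phi_gen_odd assms(1,3,4) by blast
  have E0: "x \<in> gE0 \<longleftrightarrow> x \<in> grass \<and> Par False x" for x :: "nat set \<Rightarrow> 'a"
    by (auto simp: gE0_def Par_def)
  have E1: "x \<in> gE1 \<longleftrightarrow> x \<in> grass \<and> Par True x" for x :: "nat set \<Rightarrow> 'a"
    by (auto simp: gE1_def Par_def)
  have pres: "x \<in> grass \<Longrightarrow> Par q x \<Longrightarrow> \<phi> x \<in> grass \<and> Par q (\<phi> x)" for x q
    using aut_grass[OF assms(1)] phi_par[OF assms(1) gens] by blast
  have "\<phi> ` gE0 = gE0"
  proof
    show "\<phi> ` gE0 \<subseteq> gE0" using pres E0 by auto
    show "gE0 \<subseteq> \<phi> ` gE0"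
    proof
      fix x :: "nat set \<Rightarrow> 'a" assume "x \<in> gE0"
      then have "\<phi> x \<in> gE0" "\<phi> (\<phi> x) = x" using pres E0 assms(2) by auto
      then show "x \<in> \<phi> ` gE0" by (metis imageI)
    qed
  qed
  moreover have "\<phi> ` gE1 = gE1"
  proof
    show "\<phi> ` gE1 \<subseteq> gE1" using pres E1 by auto
    show "gE1 \<subseteq> \<phi> ` gE1"
    proof
      fix x :: "nat set \<Rightarrow> 'a" assume "x \<in> gE1"
      then have "\<phi> x \<in> gE1" "\<phi> (\<phi> x) = x" using pres E1 assms(2) by auto
      then show "x \<in> \<phi> ` gE1" by (metis imageI)
    qed
  qed
  ultimately show ?thesis by simp
qed

end
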